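(* Let $P$ be a finite graded bowtie-free poset of rank $n$ with $\hat0$ and $\hat1$ equipped with a good $\mathcal{H}_n(0)$ action $U_1,\dots,U_{n-1}$. Let $\mathfrak m'$ be a maximal chain of $P$ and $i\in[n-1]$ with $U_i(\mathfrak m')\ne\mathfrak m'$. Then there is no finite sequence $i_1,\dots,i_r$ in $[n-1]$ with $U_{i_1}U_{i_2}\cdots U_{i_r}U_i(\mathfrak m')=\mathfrak m'$.
   Context: Bowtie-free: no distinct $a,b,c,d$ with $a$ and $b$ each covering both $c$ and $d$. $\mathcal{M}(P)$ is the set of maximal chains. A good $\mathcal{H}_n(0)$ action is a family of maps $U_1,\dots,U_{n-1}:\mathcal{M}(P)\to\mathcal{M}(P)$ with: (1) $U_i(\mathfrak m)$ agrees with $\mathfrak m$ except possibly at rank $i$; (2) $U_i^2=U_i$; (3) $U_iU_j=U_jU_i$ for $|i-j|\ge2$; (4) $U_iU_{i+1}U_i=U_{i+1}U_iU_{i+1}$; (5) $\omega F_P(x)=\mathrm{ch}(\chi_P)$, where $\chi_P$ is the character of the representation of the 0-Hecke algebra $\mathcal{H}_n(0)$ on $\mathbb{C}\mathcal{M}(P)$ with $T_i$ acting as $-U_i$; $F_P(x)=\sum x_1^{\mathrm{rk}(t_0,t_1)}\cdots x_k^{\mathrm{rk}(t_{k-1},t_k)}$ over multichains $\hat0=t_0\le\cdots\le t_{k-1}<t_k=\hat1$; $L_{S,n}=\sum_{1\le i_1\le\cdots\le i_n,\ i_j<i_{j+1}\ (j\in S)}x_{i_1}\cdots x_{i_n}$;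 $\omega(L_{S,n})=L_{[n-1]\setminus S,n}$; $\mathrm{ch}$ is linear with $\mathrm{ch}(\chi_S)=L_{S,n}$ where $\chi_S$ is the character of the one-dimensional representation $T_i\mapsto-1$ ($i\in S$), $T_i\mapsto 0$ ($i\notin S$). *)

theory Defs
  imports Main
begin

definition poset_on :: "'a set \<Rightarrow> ('a \<Rightarrow> 'a \<Rightarrow> bool) \<Rightarrow> bool" where
  "poset_on P le \<longleftrightarrow>
     (\<forall>x\<in>P. le x x) \<and>
     (\<forall>x\<in>P. \<forall>y\<in>P. le x y \<and> le y x \<longrightarrow> x = y) \<and>
     (\<forall>x\<in>P. \<forall>y\<in>P. \<forall>z\<in>P. le x y \<and> le y z \<longrightarrow> le x z)"

definition lt :: "('a \<Rightarrow> 'a \<Rightarrow> bool) \<Rightarrow> 'a \<Rightarrow> 'a \<Rightarrow> bool" where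
  "lt le x y \<longleftrightarrow> le x y \<and> x \<noteq> y"

definition covers :: "'a set \<Rightarrow> ('a \<Rightarrow> 'a \<Rightarrow> bool) \<Rightarrow> 'a \<Rightarrow> 'a \<Rightarrow> bool" where
  "covers P le x y \<longleftrightarrow> x \<in> P \<and> y \<in> P \<and> lt le x y \<and>
     \<not> (\<exists>z\<in>P. lt le x z \<and> lt le z y)"

definition is_bottom :: "'a set \<Rightarrow> ('a \<Rightarrow> 'a \<Rightarrow> bool) \<Rightarrow> 'a \<Rightarrow> bool" where
  "is_bottom P le z \<longleftrightarrow> z \<in> P \<and> (\<forall>x\<in>P. le z x)"

definition is_top :: "'a set \<Rightarrow> ('a \<Rightarrow> 'a \<Rightarrow> bool) \<Rightarrow> 'a \<Rightarrow> bool" where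
  "is_top P le z \<longleftrightarrow> z \<in> P \<and> (\<forall>x\<in>P. le x z)"

definition chain_on :: "('a \<Rightarrow> 'a \<Rightarrow> bool) \<Rightarrow> 'a set \<Rightarrow> bool" where
  "chain_on le C \<longleftrightarrow> (\<forall>x\<in>C. \<forall>y\<in>C. le x y \<or> le y x)"

definition maximal_chains :: "'a set \<Rightarrow> ('a \<Rightarrow> 'a \<Rightarrow> bool) \<Rightarrow> 'a set set" where
  "maximal_chains P le = {C. C \<subseteq> P \<and> chain_on le C \<and>
      (\<forall>D. C \<subseteq> D \<and> D \<subseteq> P \<and> chain_on le D \<longrightarrow> D = C)}"

text \<open>Graded of rank n: every maximal chain has length n (n+1 elements).\<close>
definition graded_of_rank :: "'a set \<Rightarrow> ('a \<Rightarrow> 'a \<Rightarrow> bool) \<Rightarrow> nat \<Rightarrow> bool" where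
  "graded_of_rank P le n \<longleftrightarrow> (\<forall>C\<in>maximal_chains P le. card C = n + 1)"

definition is_rank_function ::
  "'a set \<Rightarrow> ('a \<Rightarrow> 'a \<Rightarrow> bool) \<Rightarrow> 'a \<Rightarrow> ('a \<Rightarrow> nat) \<Rightarrow> bool" where
  "is_rank_function P le z0 rk \<longleftrightarrow> rk z0 = 0 \<and>
     (\<forall>x\<in>P. \<forall>y\<in>P. covers P le x y \<longrightarrow> rk y = rk x + 1)"

definition bowtie_free :: "'a set \<Rightarrow> ('a \<Rightarrow> 'a \<Rightarrow> bool) \<Rightarrow> bool" where
  "bowtie_free P le \<longleftrightarrow> \<not> (\<exists>a\<in>P. \<exists>b\<in>P. \<exists>c\<in>P. \<exists>d\<in>P.
      distinct [a, b, c, d] \<and> covers P le c a \<and> covers P le d a \<and>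
      covers P le c b \<and> covers P le d b)"

definition Uword :: "(nat \<Rightarrow> 'a set \<Rightarrow> 'a set) \<Rightarrow> nat list \<Rightarrow> 'a set \<Rightarrow> 'a set" where
  "Uword U w = foldr (\<lambda>i f. U i \<circ> f) w id"

text \<open>A formal power series in x_1, x_2, ... is represented by the map sending an
  exponent vector m (m j = exponent of x_j) to the coefficient of x^m.\<close>

text \<open>Coefficient of x^m in F_P: number of multichains
  t_0 = bot <= t_1 <= ... <= t_(k-1) < t_k = top (a list of length k+1) with
  rk(t_j) - rk(t_(j-1)) = m j for 1 <= j <= k and m j = 0 otherwise.\<close>
definition F_coeff :: "'a set \<Rightarrow> ('a \<Rightarrow> 'a \<Rightarrow> bool) \<Rightarrow> ('a \<Rightarrow> nat) \<Rightarrow> 'a \<Rightarrow> 'a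
    \<Rightarrow> (nat \<Rightarrow> nat) \<Rightarrow> nat" where
  "F_coeff P le rk z0 z1 m = card {t. \<exists>k. k \<ge> 1 \<and> length t = k + 1 \<and> set t \<subseteq> P \<and>
      t ! 0 = z0 \<and> t ! k = z1 \<and>
      (\<forall>j<k. le (t ! j) (t ! (j + 1))) \<and> lt le (t ! (k - 1)) (t ! k) \<and>
      (\<forall>j. m j = (if 1 \<le> j \<and> j \<le> k then rk (t ! j) - rk (t ! (j - 1)) else 0))}"

text \<open>Coefficient of x^m in L_{S,n}: number of sequences 1 <= i_1 <= ... <= i_n
  with i_j < i_(j+1) for j in S and x_(i_1)...x_(i_n) = x^m
  (list entry i ! (j-1) is i_j).\<close>
definition L_coeff :: "nat set \<Rightarrow> nat \<Rightarrow> (nat \<Rightarrow> nat) \<Rightarrow> nat" where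
  "L_coeff S n m = card {i. length i = n \<and> (\<forall>j<n. 1 \<le> i ! j) \<and>
      (\<forall>j. j + 1 < n \<longrightarrow> i ! j \<le> i ! (j + 1)) \<and>
      (\<forall>j\<in>S. 1 \<le> j \<and> j < n \<longrightarrow> i ! (j - 1) < i ! j) \<and>
      (\<forall>k. m k = card {j. j < n \<and> i ! j = k})}"

text \<open>Characters are evaluated on the elements T_{w1} T_{w2} ... T_{wr} (words w over
  [n-1]); these span H_n(0), so a character is determined by these values.
  chi_P: T_i acts on the basis M(P) of C M(P) as -U_i, so the trace of
  T_{w1}...T_{wr} is (-1)^r times the number of maximal chains fixed by
  U_{w1} o ... o U_{wr}.\<close>
definition chi_P :: "'a set \<Rightarrow> ('a \<Rightarrow> 'a \<Rightarrow> bool) \<Rightarrow> (nat \<Rightarrow> 'a set \<Rightarrow> 'a set)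
    \<Rightarrow> nat list \<Rightarrow> int" where
  "chi_P P le U w = (-1) ^ length w * int (card {C \<in> maximal_chains P le. Uword U w C = C})"

text \<open>chi_S: the one-dimensional representation T_i -> -1 (i in S), T_i -> 0 (i not in S).\<close>
definition chi_S :: "nat set \<Rightarrow> nat list \<Rightarrow> int" where
  "chi_S S w = (\<Prod>j\<leftarrow>w. if j \<in> S then -1 else 0)"

definition good_action :: "'a set \<Rightarrow> ('a \<Rightarrow> 'a \<Rightarrow> bool) \<Rightarrow> ('a \<Rightarrow> nat) \<Rightarrow> 'a \<Rightarrow> 'a
    \<Rightarrow> nat \<Rightarrow> (nat \<Rightarrow> 'a set \<Rightarrow> 'a set) \<Rightarrow> bool" where
  "good_action P le rk z0 z1 n U \<longleftrightarrow>
     (let M = maximal_chains P le; I = {1..<n} in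
       (\<forall>i\<in>I. \<forall>C\<in>M. U i C \<in> M) \<and>
       (\<forall>i\<in>I. \<forall>C\<in>M. \<forall>j. j \<noteq> i \<longrightarrow> {x \<in> U i C. rk x = j} = {x \<in> C. rk x = j}) \<and>
       (\<forall>i\<in>I. \<forall>C\<in>M. U i (U i C) = U i C) \<and>
       (\<forall>i\<in>I. \<forall>j\<in>I. \<forall>C\<in>M. (i + 2 \<le> j \<or> j + 2 \<le> i) \<longrightarrow> U i (U j C) = U j (U i C)) \<and>
       (\<forall>i\<in>I. i + 1 \<in> I \<longrightarrow> (\<forall>C\<in>M. U i (U (i+1) (U i C)) = U (i+1) (U i (U (i+1) C)))) \<and>
       \<comment> \<open>(5): omega F_P = ch(chi_P), with F_P = sum_S d_S L_{S,n} and
           chi_P = sum_S c_S chi_S\<close>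
       (\<exists>d c :: nat set \<Rightarrow> int.
          (\<forall>m. int (F_coeff P le rk z0 z1 m) = (\<Sum>S\<in>Pow I. d S * int (L_coeff S n m))) \<and>
          (\<forall>w. set w \<subseteq> I \<longrightarrow> chi_P P le U w = (\<Sum>S\<in>Pow I. c S * chi_S S w)) \<and>
          (\<forall>m. (\<Sum>S\<in>Pow I. d S * int (L_coeff (I - S) n m))
               = (\<Sum>S\<in>Pow I. c S * int (L_coeff S n m)))))"

end

theory Submission
  imports Defs
begin

lemma Uword_Nil[simp]: "Uword U [] C = C"
  by (simp add: Uword_def)

lemma Uword_Cons[simp]: "Uword U (a # w) C = U a (Uword U w C)"
  by (simp add: Uword_def)

lemma Uword_append[simp]: "Uword U (v @ w) C = Uword U v (Uword U w C)"
  by (induction v) auto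

fun run :: "nat set \<Rightarrow> nat \<Rightarrow> nat list" where
  "run J 0 = []"
| "run J (Suc k) = (if Suc k \<in> J then run J k @ [Suc k] else [])"

fun Wd :: "nat set \<Rightarrow> nat \<Rightarrow> nat list" where
  "Wd J 0 = []"
| "Wd J (Suc k) = (if Suc k \<in> J then run J (Suc k) @ Wd J k else Wd J k)"

lemma run_set: "set (run J k) \<subseteq> J \<inter> {1..k}"
  by (induction k) auto

lemma run_mem: "k \<in> J \<Longrightarrow> 1 \<le> k \<Longrightarrow> k \<in> set (run J k)"
  by (cases k) auto

lemma run_nil: "k \<notin> set (run J k) \<Longrightarrow> run J k = []"
  by (cases k) auto

lemma Wd_set: "set (Wd J k) = J \<inter> {1..k}"
proof (induction k)
  case 0
  then show ?case by auto
next
  case (Suc k)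
  have a: "set (run J (Suc k)) \<subseteq> J \<inter> {1..Suc k}" by (rule run_set)
  have b: "Suc k \<in> J \<Longrightarrow> Suc k \<in> set (run J (Suc k))" by (rule run_mem) auto
  have c: "{1..Suc k} = insert (Suc k) {1..k}" by auto
  show ?case
  proof (cases "Suc k \<in> J")
    case True
    have "set (Wd J (Suc k)) = set (run J (Suc k)) \<union> (J \<inter> {1..k})"
      using True Suc.IH by (simp del: run.simps)
    then show ?thesis using a b True unfolding c by blast
  next
    case False
    then show ?thesis using Suc.IH unfolding c by simp
  qed
qed

lemma run_far: "j \<in> J \<Longrightarrow> 1 \<le> j \<Longrightarrow> j \<le> k \<Longrightarrow> j \<notin> set (run J k) \<Longrightarrow>
   \<forall>l\<in>set (run J k). j + 2 \<le> l"
proof (induction k)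
  case 0
  then show ?case by simp
next
  case (Suc k)
  show ?case
  proof (cases "Suc k \<in> J")
    case False
    then show ?thesis by simp
  next
    case True
    then have jk: "j \<le> k" using Suc.prems by auto
    have nj: "j \<notin> set (run J k)" using Suc.prems True by auto
    have "j \<noteq> k" using run_mem[of k J] Suc.prems nj by auto
    then show ?thesis using Suc.IH[OF Suc.prems(1,2) jk nj] True jk by auto
  qed
qed

locale hk =
  fixes M :: "'a set set" and U :: "nat \<Rightarrow> 'a set \<Rightarrow> 'a set" and n :: nat
  assumes cl: "i \<in> {1..<n} \<Longrightarrow> C \<in> M \<Longrightarrow> U i C \<in> M"
  and idem: "i \<in> {1..<n} \<Longrightarrow> C \<in> M \<Longrightarrow> U i (U i C) = U i C"
  and comm: "i \<in> {1..<n} \<Longrightarrow> j \<in> {1..<n} \<Longrightarrow> C \<in> M \<Longrightarrow> i + 2 \<le> j \<or> j + 2 \<le> i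
      \<Longrightarrow> U i (U j C) = U j (U i C)"
  and braid: "i \<in> {1..<n} \<Longrightarrow> i + 1 \<in> {1..<n} \<Longrightarrow> C \<in> M \<Longrightarrow>
      U i (U (i+1) (U i C)) = U (i+1) (U i (U (i+1) C))"
begin

lemma wcl: "set w \<subseteq> {1..<n} \<Longrightarrow> C \<in> M \<Longrightarrow> Uword U w C \<in> M"
  by (induction w) (auto intro: cl)

lemma wcomm: "j \<in> {1..<n} \<Longrightarrow> set v \<subseteq> {1..<n} \<Longrightarrow> (\<forall>l\<in>set v. l + 2 \<le> j \<or> j + 2 \<le> l)
   \<Longrightarrow> C \<in> M \<Longrightarrow> U j (Uword U v C) = Uword U v (U j C)"
proof (induction v)
  case Nil
  then show ?case by simp
next
  case (Cons a v)
  have vM: "Uword U v C \<in> M" using Cons.prems by (intro wcl) auto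
  have "U j (U a (Uword U v C)) = U a (U j (Uword U v C))"
    using Cons.prems vM by (intro comm) auto
  then show ?case using Cons by simp
qed

lemma run_shift: "J \<subseteq> {1..<n} \<Longrightarrow> j \<in> set (run J k) \<Longrightarrow> C \<in> M \<Longrightarrow>
  U j (Uword U (run J k) C) = (if j - 1 \<in> set (run J k) then Uword U (run J k) (U (j-1) C)
     else Uword U (run J k) C)"
proof (induction k arbitrary: j C)
  case 0
  then show ?case by simp
next
  case (Suc k)
  have SJ: "Suc k \<in> J" using Suc.prems by (auto split: if_splits)
  have sr: "set (run J k) \<subseteq> J \<inter> {1..k}" by (rule run_set)
  have rS: "run J (Suc k) = run J k @ [Suc k]" using SJ by simp
  have SI: "Suc k \<in> {1..<n}" using SJ Suc.prems by auto
  have DM: "U (Suc k) C \<in> M" using SI Suc.prems cl by auto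
  show ?case
  proof (cases "j = Suc k")
    case True
    show ?thesis
    proof (cases "k \<in> set (run J k)")
      case True2: True
      have "k \<ge> 1" using True2 sr by auto
      then obtain k' where kk: "k = Suc k'" by (cases k) auto
      have kJ: "k \<in> J" using True2 sr by auto
      have rk: "run J k = run J k' @ [k]" using kJ kk by simp
      have kI: "k \<in> {1..<n}" using kJ Suc.prems by auto
      have sr': "set (run J k') \<subseteq> {1..k'}" using run_set[of J k'] by auto
      have "U (Suc k) (Uword U (run J (Suc k)) C) =
            U (Suc k) (Uword U (run J k') (U k (U (Suc k) C)))" using rS rk by simp
      also have "\<dots> = Uword U (run J k') (U (Suc k) (U k (U (Suc k) C)))"
        using sr' SI Suc.prems run_set[of J k'] kk
        by (intro wcomm) (auto intro!: cl wcl)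
      also have "U (Suc k) (U k (U (Suc k) C)) = U k (U (Suc k) (U k C))"
        using braid[of k C] kI SI Suc.prems by simp
      also have "Uword U (run J k') (U k (U (Suc k) (U k C))) =
          Uword U (run J (Suc k)) (U k C)" using rS rk by simp
      finally show ?thesis using True True2 rS by simp
    next
      case False
      have "run J k = []" using False run_nil by auto
      then have r1: "run J (Suc k) = [Suc k]" using rS by simp
      show ?thesis unfolding r1 using True idem SI Suc.prems by simp
    qed
  next
    case False
    have jr: "j \<in> set (run J k)" using Suc.prems False rS by auto
    then have jk: "j \<le> k" "1 \<le> j" using sr by auto
    have IH: "U j (Uword U (run J k) (U (Suc k) C)) = (if j - 1 \<in> set (run J k)
        then Uword U (run J k) (U (j-1) (U (Suc k) C)) else Uword U (run J k) (U (Suc k) C))"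
      using Suc.IH[OF Suc.prems(1) jr DM] .
    have eq: "j - 1 \<in> set (run J (Suc k)) \<longleftrightarrow> j - 1 \<in> set (run J k)" using rS jk by auto
    show ?thesis
    proof (cases "j - 1 \<in> set (run J k)")
      case True
      have "j - 1 \<in> {1..<n}" using True sr Suc.prems by auto
      then have "U (j-1) (U (Suc k) C) = U (Suc k) (U (j-1) C)"
        using comm[of "j-1" "Suc k" C] SI Suc.prems jk by auto
      then show ?thesis using IH True eq rS by (simp del: run.simps)
    next
      case False
      then show ?thesis using IH eq rS False by (simp del: run.simps)
    qed
  qed
qed

lemma absorb: "J \<subseteq> {1..<n} \<Longrightarrow> j \<in> J \<Longrightarrow> j \<le> k \<Longrightarrow> C \<in> M \<Longrightarrow>
   U j (Uword U (Wd J k) C) = Uword U (Wd J k) C"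
proof (induction k arbitrary: j)
  case 0
  then show ?case by auto
next
  case (Suc k)
  have j1: "1 \<le> j" "j \<in> {1..<n}" using Suc.prems by auto
  show ?case
  proof (cases "Suc k \<in> J")
    case False
    then have "j \<le> k" using Suc.prems by (auto simp: le_Suc_eq)
    then show ?thesis using Suc False by simp
  next
    case True
    define D where "D = Uword U (Wd J k) C"
    have DM: "D \<in> M" unfolding D_def using Wd_set[of J k] Suc.prems by (intro wcl) auto
    have sr: "set (run J (Suc k)) \<subseteq> J \<inter> {1..Suc k}" by (rule run_set)
    have e: "Uword U (Wd J (Suc k)) C = Uword U (run J (Suc k)) D" using True D_def by simp
    show ?thesis
    proof (cases "j \<in> set (run J (Suc k))")
      case True2: True
      show ?thesis
      proof (cases "j - 1 \<in> set (run J (Suc k))")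
        case True3: True
        have "U (j-1) D = D" unfolding D_def
          using True3 sr Suc.prems by (intro Suc.IH) auto
        then show ?thesis using e run_shift[OF Suc.prems(1) True2 DM] True3 by (simp del: run.simps Wd.simps)
      next
        case False
        then show ?thesis using e run_shift[OF Suc.prems(1) True2 DM] by (simp del: run.simps Wd.simps)
      qed
    next
      case False
      have jk: "j \<le> k" using False True Suc.prems by (auto simp: le_Suc_eq)
      have far: "\<forall>l\<in>set (run J (Suc k)). j + 2 \<le> l"
        using run_far[of j J "Suc k"] False Suc.prems j1 by auto
      have "U j (Uword U (run J (Suc k)) D) = Uword U (run J (Suc k)) (U j D)"
        using far j1 sr Suc.prems DM by (intro wcomm) auto
      also have "U j D = D" unfolding D_def using Suc.prems jk by (intro Suc.IH) auto
      finally show ?thesis using e by simp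
    qed
  qed
qed

lemma cf_fix: "set v \<subseteq> J \<Longrightarrow> (\<forall>j\<in>J. U j C = C) \<Longrightarrow> Uword U v C = C"
  by (induction v) auto

end

lemma chi_S_eq: "chi_S S w = (if set w \<subseteq> S then (-1) ^ length w else 0)"
  unfolding chi_S_def by (induction w) auto

theorem mainTheorem9:
  fixes P :: "'a set" and le :: "'a \<Rightarrow> 'a \<Rightarrow> bool" and n :: nat
    and z0 z1 :: 'a and rk :: "'a \<Rightarrow> nat" and U :: "nat \<Rightarrow> 'a set \<Rightarrow> 'a set"
    and m' :: "'a set" and i :: nat
  assumes "finite P" and "poset_on P le"
    and "is_bottom P le z0" and "is_top P le z1"
    and "graded_of_rank P le n" and "is_rank_function P le z0 rk"
    and "bowtie_free P le"
    and "good_action P le rk z0 z1 n U"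
    and "m' \<in> maximal_chains P le" and "i \<in> {1..<n}" and "U i m' \<noteq> m'"
  shows "\<not> (\<exists>w. set w \<subseteq> {1..<n} \<and> Uword U w (U i m') = m')"
proof
  assume "\<exists>w. set w \<subseteq> {1..<n} \<and> Uword U w (U i m') = m'"
  then obtain w where w: "set w \<subseteq> {1..<n}" "Uword U w (U i m') = m'" by blast
  define M where "M = maximal_chains P le"
  define I where "I = {1..<(n::nat)}"
  have GA: "(\<forall>i\<in>I. \<forall>C\<in>M. U i C \<in> M) \<and>
       (\<forall>i\<in>I. \<forall>C\<in>M. U i (U i C) = U i C) \<and>
       (\<forall>i\<in>I. \<forall>j\<in>I. \<forall>C\<in>M. (i + 2 \<le> j \<or> j + 2 \<le> i) \<longrightarrow> U i (U j C) = U j (U i C)) \<and>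
       (\<forall>i\<in>I. i + 1 \<in> I \<longrightarrow> (\<forall>C\<in>M. U i (U (i+1) (U i C)) = U (i+1) (U i (U (i+1) C))))"
    using assms(8) unfolding good_action_def Let_def M_def I_def
    apply (elim conjE exE) apply (intro conjI) by assumption+
  obtain c :: "nat set \<Rightarrow> int" where
    c: "\<forall>w. set w \<subseteq> I \<longrightarrow> chi_P P le U w = (\<Sum>S\<in>Pow I. c S * chi_S S w)"
    using assms(8) unfolding good_action_def Let_def I_def
    apply (elim conjE exE) by assumption
  interpret hk M U n
    using GA unfolding I_def by unfold_locales auto
  have finM: "finite M" unfolding M_def maximal_chains_def
    using assms(1) by (rule finite_subset[rotated, OF finite_Pow_iff[THEN iffD2]]) auto
  have cnt: "int (card {C \<in> M. Uword U v C = C}) = (\<Sum>S\<in>Pow I. if set v \<subseteq> S then c S else 0)"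
    if "set v \<subseteq> I" for v
  proof -
    have "(-1) ^ length v * int (card {C \<in> M. Uword U v C = C})
        = (\<Sum>S\<in>Pow I. c S * (if set v \<subseteq> S then (-1) ^ length v else 0))"
      using c that unfolding chi_P_def M_def by (simp add: chi_S_eq)
    also have "\<dots> = (-1) ^ length v * (\<Sum>S\<in>Pow I. if set v \<subseteq> S then c S else 0)"
      by (simp add: sum_distrib_left if_distrib mult.commute cong: if_cong)
    finally show ?thesis by simp
  qed
  define J where "J = insert i (set w)"
  have JI: "J \<subseteq> I" using w assms(10) unfolding J_def I_def by auto
  define v where "v = w @ [i]"
  define W0 where "W0 = Wd J (n - 1)"
  have sW0: "set W0 = J" unfolding W0_def Wd_set using JI unfolding I_def by fastforce
  have sv: "set v = J" unfolding v_def J_def by auto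
  define A where "A = {C \<in> M. Uword U W0 C = C}"
  define B where "B = {C \<in> M. Uword U v C = C}"
  have cardeq: "card A = card B" using cnt[of W0] cnt[of v] sW0 sv JI
    unfolding A_def B_def by simp
  have AB: "A \<subseteq> B"
  proof
    fix C assume "C \<in> A"
    then have CM: "C \<in> M" and fx: "Uword U W0 C = C" unfolding A_def by auto
    have "\<forall>j\<in>J. U j C = C"
    proof
      fix j assume "j \<in> J"
      moreover have "j \<in> {1..<n}" using JI \<open>j \<in> J\<close> unfolding I_def by blast
      ultimately have "U j (Uword U W0 C) = Uword U W0 C" unfolding W0_def
        using JI CM unfolding I_def by (intro absorb) auto
      then show "U j C = C" using fx by simp
    qed
    then show "C \<in> B" using cf_fix[of v J C] sv CM unfolding B_def by auto
  qed
  have finB: "finite B" unfolding B_def using finM by auto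
  have "A = B" using card_subset_eq[OF finB AB cardeq] .
  moreover have "m' \<in> B" unfolding B_def v_def using w assms(9) M_def by simp
  ultimately have "Uword U W0 m' = m'" and "m' \<in> M" unfolding A_def by auto
  then have "U i (Uword U W0 m') = Uword U W0 m'" unfolding W0_def
    using JI assms(10) unfolding I_def J_def by (intro absorb) auto
  then show False using \<open>Uword U W0 m' = m'\<close> assms(11) by simp
qed

end
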